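(* Let $A$ be a two-dimensional evolution algebra over a field $\mathbb{K}$ with $A^2=A$. Then the Lie algebra $\mathrm{Der}(A)$ of derivations of $A$ is zero, except when $\mathrm{char}(\mathbb{K})=3$ and $A\cong A_{2,\alpha}$ for some $\alpha\in\mathbb{K}^\times$. If $\mathrm{char}(\mathbb{K})=3$, then $\mathrm{Der}(A_{2,\alpha})=\{d_a : a\in\mathbb{K}\}$, where, with respect to a natural basis $\{e_1,e_2\}$ with $e_1^2=e_2$, $e_2^2=\alpha e_1$, the map $d_a$ is given by $d_a(re_1+se_2)=are_1-ase_2$; and $\mathrm{Der}(A)=0$ whenever $A$ is not isomorphic to any $A_{2,\alpha}$.
   Context: An evolution algebra over $\mathbb{K}$ is a $\mathbb{K}$-algebra with a basis $\{e_i\}$ (natural basis) such that $e_ie_j=0$ for $i\neq j$. $A_{2,\alpha}$ ($\alpha\in\mathbb{K}^\times$) is the evolution algebra with natural basis $\{e_1,e_2\}$, $e_1^2=e_2$, $e_2^2=\alpha e_1$. A derivation is a linear map $d$ with $d(xy)=d(x)y+xd(y)$. *)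

theory Defs
  imports Complex_Main "HOL-Library.Product_Plus"
begin

text \<open>A two-dimensional vector space over a field 'k is modelled as 'k \<times> 'k
  (with componentwise addition from Product_Plus) and scalar multiplication sc.\<close>

definition sc :: "'k::field \<Rightarrow> 'k \<times> 'k \<Rightarrow> 'k \<times> 'k" where
  "sc c v = (c * fst v, c * snd v)"

definition bilinear_mult :: "('k::field \<times> 'k \<Rightarrow> 'k \<times> 'k \<Rightarrow> 'k \<times> 'k) \<Rightarrow> bool" where
  "bilinear_mult m \<longleftrightarrow>
     (\<forall>x y z. m (x + y) z = m x z + m y z) \<and>
     (\<forall>x y z. m x (y + z) = m x y + m x z) \<and>
     (\<forall>c x y. m (sc c x) y = sc c (m x y)) \<and>
     (\<forall>c x y. m x (sc c y) = sc c (m x y))"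

definition is_basis2 :: "'k::field \<times> 'k \<Rightarrow> 'k \<times> 'k \<Rightarrow> bool" where
  "is_basis2 e1 e2 \<longleftrightarrow> (\<forall>v. \<exists>!rs. v = sc (fst rs) e1 + sc (snd rs) e2)"

definition natural_basis :: "('k::field \<times> 'k \<Rightarrow> 'k \<times> 'k \<Rightarrow> 'k \<times> 'k) \<Rightarrow> 'k \<times> 'k \<Rightarrow> 'k \<times> 'k \<Rightarrow> bool" where
  "natural_basis m e1 e2 \<longleftrightarrow> is_basis2 e1 e2 \<and> m e1 e2 = 0 \<and> m e2 e1 = 0"

definition evolution_algebra :: "('k::field \<times> 'k \<Rightarrow> 'k \<times> 'k \<Rightarrow> 'k \<times> 'k) \<Rightarrow> bool" where
  "evolution_algebra m \<longleftrightarrow> bilinear_mult m \<and> (\<exists>e1 e2. natural_basis m e1 e2)"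

text \<open>A^2 = A: the linear span of all products is the whole space.\<close>
definition square_full :: "('k::field \<times> 'k \<Rightarrow> 'k \<times> 'k \<Rightarrow> 'k \<times> 'k) \<Rightarrow> bool" where
  "square_full m \<longleftrightarrow> module.span sc {m x y | x y. True} = UNIV"

definition derivation :: "('k::field \<times> 'k \<Rightarrow> 'k \<times> 'k \<Rightarrow> 'k \<times> 'k) \<Rightarrow> ('k \<times> 'k \<Rightarrow> 'k \<times> 'k) \<Rightarrow> bool" where
  "derivation m d \<longleftrightarrow> Vector_Spaces.linear sc sc d \<and>
     (\<forall>x y. d (m x y) = m (d x) y + m x (d y))"

definition Der :: "('k::field \<times> 'k \<Rightarrow> 'k \<times> 'k \<Rightarrow> 'k \<times> 'k) \<Rightarrow> ('k \<times> 'k \<Rightarrow> 'k \<times> 'k) set" where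
  "Der m = {d. derivation m d}"

definition alg_isomorphic :: "('k::field \<times> 'k \<Rightarrow> 'k \<times> 'k \<Rightarrow> 'k \<times> 'k) \<Rightarrow> ('k \<times> 'k \<Rightarrow> 'k \<times> 'k \<Rightarrow> 'k \<times> 'k) \<Rightarrow> bool" where
  "alg_isomorphic m1 m2 \<longleftrightarrow> (\<exists>f. bij f \<and> Vector_Spaces.linear sc sc f \<and>
     (\<forall>x y. f (m1 x y) = m2 (f x) (f y)))"

text \<open>A_{2,\<alpha>} on the standard basis e1 = (1,0), e2 = (0,1):
  e1^2 = e2, e2^2 = \<alpha> e1, e1 e2 = e2 e1 = 0.\<close>
definition A2 :: "'k::field \<Rightarrow> 'k \<times> 'k \<Rightarrow> 'k \<times> 'k \<Rightarrow> 'k \<times> 'k" where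
  "A2 \<alpha> x y = (\<alpha> * snd x * snd y, fst x * fst y)"

end

theory Submission
  imports Defs
begin

lemma sc_zero[simp]: "sc c 0 = 0" by (simp add: sc_def zero_prod_def)
lemma sc_sc[simp]: "sc a (sc b x) = sc (a*b) x" by (simp add: sc_def)
lemma sc_add: "sc a (x + y) = sc a x + sc a y" by (simp add: sc_def prod_eq_iff algebra_simps)
lemma comb_add: "(sc r e1 + sc s e2) + (sc r' e1 + sc s' e2) = sc (r+r') e1 + sc (s+s') e2"
  by (simp add: sc_def prod_eq_iff algebra_simps)
lemma comb_sc: "sc c (sc r e1 + sc s e2) = sc (c*r) e1 + sc (c*s) e2"
  by (simp add: sc_def prod_eq_iff algebra_simps)
lemma comb_zero: "sc 0 e1 + sc 0 e2 = 0" by (simp add: sc_def zero_prod_def)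
lemma comb_diff: "sc a e1 - sc b e2 = sc a e1 + sc (-b) e2"
  by (simp add: sc_def prod_eq_iff algebra_simps)

lemma vs_sc: "vector_space (sc :: 'k::field \<Rightarrow> _)"
  by unfold_locales (auto simp: sc_def prod_eq_iff algebra_simps)
lemma mod_sc: "module (sc :: 'k::field \<Rightarrow> _)"
  by unfold_locales (auto simp: sc_def prod_eq_iff algebra_simps)

lemma basis_ex: "is_basis2 e1 e2 \<Longrightarrow> \<exists>r s. v = sc r e1 + sc s e2"
  unfolding is_basis2_def by (metis)
lemma basis_uniq: "is_basis2 e1 e2 \<Longrightarrow>
  (sc r e1 + sc s e2 = sc r' e1 + sc s' e2) \<longleftrightarrow> (r = r' \<and> s = s')"
  unfolding is_basis2_def
  by (metis fst_conv snd_conv)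

lemma bil_mult:
  assumes "bilinear_mult m" "natural_basis m e1 e2"
  shows "m (sc r e1 + sc s e2) (sc r' e1 + sc s' e2) = sc (r*r') (m e1 e1) + sc (s*s') (m e2 e2)"
proof -
  have a1: "\<And>x y z. m (x + y) z = m x z + m y z" and a2: "\<And>x y z. m x (y + z) = m x y + m x z"
   and a3: "\<And>c x y. m (sc c x) y = sc c (m x y)" and a4: "\<And>c x y. m x (sc c y) = sc c (m x y)"
    using assms(1) unfolding bilinear_mult_def by blast+
  have z: "m e1 e2 = 0" "m e2 e1 = 0" using assms(2) unfolding natural_basis_def by auto
  show ?thesis by (simp add: a1 a2 a3 a4 z mult.commute)
qed

lemma bil_zero:
  assumes "bilinear_mult m" shows "m 0 y = 0" "m x 0 = 0"
proof -
  have "m (0+0) y = m 0 y + m 0 y" using assms unfolding bilinear_mult_def by blast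
  then show "m 0 y = 0" by simp
  have "m x (0+0) = m x 0 + m x 0" using assms unfolding bilinear_mult_def by blast
  then show "m x 0 = 0" by simp
qed

lemma lin_comb:
  assumes "Vector_Spaces.linear sc sc d"
  shows "d (sc r e1 + sc s e2) = sc r (d e1) + sc s (d e2)"
proof -
  have l1: "\<And>x y. d (x + y) = d x + d y" and l2: "\<And>c x. d (sc c x) = sc c (d x)"
    using assms unfolding Vector_Spaces.linear_iff by blast+
  show ?thesis by (simp add: l1 l2)
qed

lemma nb_basis: "natural_basis m e1 e2 \<Longrightarrow> is_basis2 e1 e2" by (simp add: natural_basis_def)

lemma mult_coeffs:
  assumes bm: "bilinear_mult m" and nb: "natural_basis m e1 e2"
    and E1: "m e1 e1 = sc a11 e1 + sc a21 e2" and E2: "m e2 e2 = sc a12 e1 + sc a22 e2"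
  shows "m (sc r e1 + sc s e2) (sc r' e1 + sc s' e2) = sc (r*r'*a11 + s*s'*a12) e1 + sc (r*r'*a21 + s*s'*a22) e2"
  by (simp add: bil_mult[OF bm nb] E1 E2 comb_sc comb_add mult.assoc)

lemma lin_coeffs:
  assumes "Vector_Spaces.linear sc sc d"
    and D1: "d e1 = sc x1 e1 + sc y1 e2" and D2: "d e2 = sc x2 e1 + sc y2 e2"
  shows "d (sc r e1 + sc s e2) = sc (r*x1 + s*x2) e1 + sc (r*y1 + s*y2) e2"
  by (simp add: lin_comb[OF assms(1)] D1 D2 comb_sc comb_add)

lemma der_coeffs:
  assumes bm: "bilinear_mult m" and nb: "natural_basis m e1 e2"
    and E1: "m e1 e1 = sc a11 e1 + sc a21 e2" and E2: "m e2 e2 = sc a12 e1 + sc a22 e2"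
    and der: "derivation m d"
    and D1: "d e1 = sc x1 e1 + sc y1 e2" and D2: "d e2 = sc x2 e1 + sc y2 e2"
  shows "(r*r'*a11 + s*s'*a12)*x1 + (r*r'*a21 + s*s'*a22)*x2
           = (r*x1+s*x2)*r'*a11 + (r*y1+s*y2)*s'*a12 + r*(r'*x1+s'*x2)*a11 + s*(r'*y1+s'*y2)*a12
       \<and> (r*r'*a11 + s*s'*a12)*y1 + (r*r'*a21 + s*s'*a22)*y2
           = (r*x1+s*x2)*r'*a21 + (r*y1+s*y2)*s'*a22 + r*(r'*x1+s'*x2)*a21 + s*(r'*y1+s'*y2)*a22"
proof -
  have lin: "Vector_Spaces.linear sc sc d" and dm: "\<And>x y. d (m x y) = m (d x) y + m x (d y)"
    using der unfolding derivation_def by blast+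
  note mc = mult_coeffs[OF bm nb E1 E2]
  note dc = lin_coeffs[OF lin D1 D2]
  have "d (m (sc r e1 + sc s e2) (sc r' e1 + sc s' e2))
     = m (d (sc r e1 + sc s e2)) (sc r' e1 + sc s' e2) + m (sc r e1 + sc s e2) (d (sc r' e1 + sc s' e2))"
    by (rule dm)
  then have "sc ((r*r'*a11 + s*s'*a12)*x1 + (r*r'*a21 + s*s'*a22)*x2) e1 + sc ((r*r'*a11 + s*s'*a12)*y1 + (r*r'*a21 + s*s'*a22)*y2) e2
     = sc ((r*x1+s*x2)*r'*a11 + (r*y1+s*y2)*s'*a12 + r*(r'*x1+s'*x2)*a11 + s*(r'*y1+s'*y2)*a12) e1
       + sc ((r*x1+s*x2)*r'*a21 + (r*y1+s*y2)*s'*a22 + r*(r'*x1+s'*x2)*a21 + s*(r'*y1+s'*y2)*a22) e2"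
    unfolding mc dc comb_add by (simp add: algebra_simps)
  then show ?thesis using basis_uniq[OF nb_basis[OF nb]] by blast
qed

lemma der_struct:
  assumes bm: "bilinear_mult m" and nb: "natural_basis m e1 e2"
    and E1: "m e1 e1 = sc a11 e1 + sc a21 e2" and E2: "m e2 e2 = sc a12 e1 + sc a22 e2"
    and det: "a11*a22 - a12*a21 \<noteq> 0"
    and der: "derivation m d"
    and D1: "d e1 = sc x1 e1 + sc y1 e2" and D2: "d e2 = sc x2 e1 + sc y2 e2"
  shows "y1 = 0 \<and> x2 = 0 \<and> a11*x1 = 0 \<and> a22*y2 = 0 \<and> a21*y2 = 2*a21*x1 \<and> a12*x1 = 2*a12*y2"
proof -
  note dc = der_coeffs[OF bm nb E1 E2 der D1 D2]
  have "0 = y1*a12 + x2*a11" "0 = y1*a22 + x2*a21"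
    using dc[of 1 0 0 1] by simp_all
  then have h1: "y1 = 0 \<and> x2 = 0"
  proof -
    assume q: "0 = y1*a12 + x2*a11" "0 = y1*a22 + x2*a21"
    have "(a11*a22 - a12*a21) * y1 = a11 * (y1*a22 + x2*a21) - a21*(y1*a12 + x2*a11)" by (simp add: algebra_simps)
    then have "(a11*a22 - a12*a21) * y1 = 0" using q by simp
    moreover have "(a11*a22 - a12*a21) * x2 = a22 * (y1*a12 + x2*a11) - a12*(y1*a22 + x2*a21)" by (simp add: algebra_simps)
    then have "(a11*a22 - a12*a21) * x2 = 0" using q by simp
    ultimately show ?thesis using det by simp
  qed
  have p: "a11*x1 + a21*x2 = x1*a11 + x1*a11 \<and> a11*y1 + a21*y2 = x1*a21 + x1*a21"
    using dc[of 1 1 0 0] by simp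
  have q: "a12*x1 + a22*x2 = y2*a12 + y2*a12 \<and> a12*y1 + a22*y2 = y2*a22 + y2*a22"
    using dc[of 0 0 1 1] by simp
  have "a11*x1 = 0" using p h1 by algebra
  moreover have "a21*y2 = 2*a21*x1" using p h1 by algebra
  moreover have "a22*y2 = 0" using q h1 by algebra
  moreover have "a12*x1 = 2*a12*y2" using q h1 by algebra
  ultimately show ?thesis using h1 by simp
qed

lemma field_cases:
  fixes a11 :: "'k::field"
  assumes det: "a11*a22 - a12*a21 \<noteq> 0" and h: "a11*x1 = 0" "a22*y2 = 0" "a21*y2 = 2*a21*x1" "a12*x1 = 2*a12*y2"
  shows "(x1 = 0 \<and> y2 = 0) \<or> (a11 = 0 \<and> a22 = 0 \<and> a12 \<noteq> 0 \<and> a21 \<noteq> 0 \<and> y2 = 2*x1 \<and> 3*x1 = 0)"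
proof (cases "a11 = 0")
  case False
  then have x: "x1 = 0" using h(1) by simp
  show ?thesis
  proof (cases "a22 = 0")
    case True
    then have "a21 \<noteq> 0" using det by auto
    then have "y2 = 0" using h(3) x by simp
    then show ?thesis using x by simp
  next
    case False
    then show ?thesis using h(2) x by simp
  qed
next
  case True
  then have a: "a12 \<noteq> 0" "a21 \<noteq> 0" using det by auto
  have "a21*y2 = a21*(2*x1)" using h(3) by (metis mult.left_commute mult.assoc)
  then have y1: "y2 = 2*x1" using a(2) by simp
  have "a12*x1 = a12*(2*y2)" using h(4) by (metis mult.left_commute mult.assoc)
  then have y2: "x1 = 2*y2" using a(1) by simp
  show ?thesis
  proof (cases "a22 = 0")
    case False
    then have "y2 = 0" using h(2) by simp
    then show ?thesis using y2 by simp
  next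
    case False': True
    have "3*x1 = 0" using y1 y2 by algebra
    then show ?thesis using True False' a y1 by simp
  qed
qed

lemma det_nonzero:
  fixes m :: "'k::field \<times> 'k \<Rightarrow> 'k \<times> 'k \<Rightarrow> 'k \<times> 'k"
  assumes bm: "bilinear_mult m" and nb: "natural_basis m e1 e2"
    and E1: "m e1 e1 = sc a11 e1 + sc a21 e2" and E2: "m e2 e2 = sc a12 e1 + sc a22 e2"
    and sf: "square_full m"
  shows "a11*a22 - a12*a21 \<noteq> 0"
proof -
  interpret M: module "sc :: 'k \<Rightarrow> 'k \<times> 'k \<Rightarrow> 'k \<times> 'k" by (rule mod_sc)
  note B = nb_basis[OF nb]
  define T where "T = {v. \<exists>r s. v = sc r (m e1 e1) + sc s (m e2 e2)}"
  have t0: "0 \<in> T" unfolding T_def using comb_zero[symmetric] by blast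
  have tadd: "x + y \<in> T" if xT: "x \<in> T" and yT: "y \<in> T" for x y
  proof -
    obtain r s r' s' where "x = sc r (m e1 e1) + sc s (m e2 e2)" "y = sc r' (m e1 e1) + sc s' (m e2 e2)"
      using xT yT unfolding T_def by blast
    then have "x + y = sc (r+r') (m e1 e1) + sc (s+s') (m e2 e2)" by (simp add: comb_add)
    then show ?thesis unfolding T_def by blast
  qed
  have tsc: "sc c x \<in> T" if xT: "x \<in> T" for c x
  proof -
    obtain r s where "x = sc r (m e1 e1) + sc s (m e2 e2)"
      using xT unfolding T_def by blast
    then have "sc c x = sc (c*r) (m e1 e1) + sc (c*s) (m e2 e2)" by (simp add: comb_sc)
    then show ?thesis unfolding T_def by blast
  qed
  have sub: "M.subspace T" unfolding M.subspace_def using t0 tadd tsc by blast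
  have "{m x y | x y. True} \<subseteq> T"
  proof
    fix v assume "v \<in> {m x y | x y. True}"
    then obtain x y where v: "v = m x y" by blast
    obtain r s where x: "x = sc r e1 + sc s e2" using basis_ex[OF B] by blast
    obtain r' s' where y: "y = sc r' e1 + sc s' e2" using basis_ex[OF B] by blast
    show "v \<in> T" unfolding T_def v x y bil_mult[OF bm nb] by blast
  qed
  then have "M.span {m x y | x y. True} \<subseteq> T" using M.span_minimal sub by blast
  then have UT: "UNIV \<subseteq> T" using sf unfolding square_full_def by simp
  have comb: "sc r (m e1 e1) + sc s (m e2 e2) = sc (r*a11 + s*a12) e1 + sc (r*a21 + s*a22) e2" for r s
    unfolding E1 E2 comb_sc comb_add by simp
  obtain r s where "e1 = sc r (m e1 e1) + sc s (m e2 e2)" using UT unfolding T_def by blast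
  then have "sc 1 e1 + sc 0 e2 = sc (r*a11 + s*a12) e1 + sc (r*a21 + s*a22) e2"
    unfolding comb by (simp add: sc_def zero_prod_def)
  then have q1: "1 = r*a11 + s*a12" "0 = r*a21 + s*a22" using basis_uniq[OF B] by blast+
  obtain r' s' where "e2 = sc r' (m e1 e1) + sc s' (m e2 e2)" using UT unfolding T_def by blast
  then have "sc 0 e1 + sc 1 e2 = sc (r'*a11 + s'*a12) e1 + sc (r'*a21 + s'*a22) e2"
    unfolding comb by (simp add: sc_def zero_prod_def)
  then have q2: "0 = r'*a11 + s'*a12" "1 = r'*a21 + s'*a22" using basis_uniq[OF B] by blast+
  have "(a11*a22 - a12*a21)*(r*s' - r'*s) = 1" using q1 q2 by algebra
  then show ?thesis by auto
qed


lemma iso_A2: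
  fixes m :: "'k::field \<times> 'k \<Rightarrow> 'k \<times> 'k \<Rightarrow> 'k \<times> 'k"
  assumes bm: "bilinear_mult m" and nb: "natural_basis m e1 e2"
    and E1: "m e1 e1 = sc 0 e1 + sc a21 e2" and E2: "m e2 e2 = sc a12 e1 + sc 0 e2"
    and a21: "a21 \<noteq> 0" and a12: "a12 \<noteq> 0"
  shows "alg_isomorphic m (A2 (a21^2 * a12))"
proof -
  note B = nb_basis[OF nb]
  define co where "co v = (THE rs. v = sc (fst rs) e1 + sc (snd rs) e2)" for v
  have co: "co (sc r e1 + sc s e2) = (r, s)" for r s
    unfolding co_def
  proof (rule the_equality)
    fix rs assume "sc r e1 + sc s e2 = sc (fst rs) e1 + sc (snd rs) e2"
    then show "rs = (r, s)" using basis_uniq[OF B] by (metis prod.collapse)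
  qed simp
  define f where "f v = (fst (co v), snd (co v) / a21)" for v
  have fc: "f (sc r e1 + sc s e2) = (r, s / a21)" for r s unfolding f_def co by simp
  have lin: "Vector_Spaces.linear sc sc f"
    unfolding Vector_Spaces.linear_iff
  proof (intro conjI allI)
    show "vector_space (sc :: 'k \<Rightarrow> _)" by (rule vs_sc)
    show "vector_space (sc :: 'k \<Rightarrow> _)" by (rule vs_sc)
  next
    fix x y
    obtain r s where x: "x = sc r e1 + sc s e2" using basis_ex[OF B] by blast
    obtain r' s' where y: "y = sc r' e1 + sc s' e2" using basis_ex[OF B] by blast
    show "f (x + y) = f x + f y" unfolding x y comb_add fc by (simp add: add_divide_distrib)
  next
    fix c x
    obtain r s where x: "x = sc r e1 + sc s e2" using basis_ex[OF B] by blast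
    show "f (sc c x) = sc c (f x)" unfolding x comb_sc fc by (simp add: sc_def)
  qed
  have "bij f"
  proof (rule bijI)
    show "inj f"
    proof (rule injI)
      fix x y assume eq: "f x = f y"
      obtain r s where x: "x = sc r e1 + sc s e2" using basis_ex[OF B] by blast
      obtain r' s' where y: "y = sc r' e1 + sc s' e2" using basis_ex[OF B] by blast
      from eq have "r = r'" "s / a21 = s' / a21" unfolding x y fc by simp_all
      then have "r = r'" "s = s'" using a21 by simp_all
      then show "x = y" using x y by simp
    qed
    show "surj f"
    proof (rule surjI)
      fix p :: "'k \<times> 'k"
      show "f (sc (fst p) e1 + sc (snd p * a21) e2) = p" unfolding fc using a21 by simp
    qed
  qed
  moreover have "f (m x y) = A2 (a21^2 * a12) (f x) (f y)" for x y
  proof -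
    obtain r s where x: "x = sc r e1 + sc s e2" using basis_ex[OF B] by blast
    obtain r' s' where y: "y = sc r' e1 + sc s' e2" using basis_ex[OF B] by blast
    show ?thesis unfolding x y mult_coeffs[OF bm nb E1 E2] fc A2_def using a21
      by (simp add: power2_eq_square field_simps)
  qed
  ultimately show ?thesis unfolding alg_isomorphic_def using lin by blast
qed


lemma three_ne0:
  assumes "CHAR('k::field) \<noteq> 3" shows "(3::'k) \<noteq> 0"
proof
  assume "(3::'k) = 0"
  then have "of_nat 3 = (0::'k)" by simp
  then have "CHAR('k) dvd 3" by (simp only: of_nat_eq_0_iff_char_dvd)
  moreover have "CHAR('k) \<noteq> 1"
  proof
    assume "CHAR('k) = 1"
    then have "of_nat 1 = (0::'k)" by (simp only: of_nat_eq_0_iff_char_dvd) simp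
    then show False by simp
  qed
  moreover have "CHAR('k) \<le> 3" using calculation(1) by (rule dvd_imp_le) simp
  moreover have "CHAR('k) \<noteq> 0"
  proof
    assume "CHAR('k) = 0"
    with calculation(1) show False by simp
  qed
  moreover have "\<not> (2::nat) dvd 3" by simp
  ultimately show False using assms by (metis le_Suc_eq le_0_eq numeral_3_eq_3 numeral_2_eq_2 One_nat_def)
qed

lemma three_eq0:
  assumes "CHAR('k::field) = 3" shows "(3::'k) = 0"
proof -
  have "of_nat 3 = (0::'k)" using assms by (simp only: of_nat_eq_0_iff_char_dvd) simp
  then show ?thesis by simp
qed

lemma diff3: fixes x y z :: "'k::field" shows "(3::'k) = 0 \<Longrightarrow> x - y = 3 * z \<Longrightarrow> x = y" by simp

lemma zero_der: "bilinear_mult m \<Longrightarrow> derivation m (\<lambda>_. 0)"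
  unfolding derivation_def Vector_Spaces.linear_iff by (simp add: vs_sc bil_zero)

theorem proposition5p3:
  fixes m :: "'k::field \<times> 'k \<Rightarrow> 'k \<times> 'k \<Rightarrow> 'k \<times> 'k"
  assumes "evolution_algebra m"
    and "square_full m"
  shows "(\<not> (CHAR('k) = 3 \<and> (\<exists>\<alpha>. \<alpha> \<noteq> 0 \<and> alg_isomorphic m (A2 \<alpha>)))
            \<longrightarrow> Der m = {\<lambda>_. 0})
       \<and> (CHAR('k) = 3 \<longrightarrow>
            (\<forall>e1 e2 \<alpha>. \<alpha> \<noteq> 0 \<and> natural_basis m e1 e2 \<and> m e1 e1 = e2 \<and> m e2 e2 = sc \<alpha> e1
               \<longrightarrow> Der m = {d. \<exists>a. \<forall>r s. d (sc r e1 + sc s e2) = sc (a * r) e1 - sc (a * s) e2}))"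
proof (intro conjI impI allI)
  have bm: "bilinear_mult m" using assms(1) unfolding evolution_algebra_def by blast
  obtain e1 e2 where nb: "natural_basis m e1 e2" using assms(1) unfolding evolution_algebra_def by blast
  note B = nb_basis[OF nb]
  obtain a11 a21 where E1: "m e1 e1 = sc a11 e1 + sc a21 e2" using basis_ex[OF B] by blast
  obtain a12 a22 where E2: "m e2 e2 = sc a12 e1 + sc a22 e2" using basis_ex[OF B] by blast
  have det: "a11*a22 - a12*a21 \<noteq> 0" by (rule det_nonzero[OF bm nb E1 E2 assms(2)])
  assume H: "\<not> (CHAR('k) = 3 \<and> (\<exists>\<alpha>. \<alpha> \<noteq> 0 \<and> alg_isomorphic m (A2 \<alpha>)))"
  show "Der m = {\<lambda>_. 0}"
  proof
    show "{\<lambda>_. 0} \<subseteq> Der m" using zero_der[OF bm] unfolding Der_def by simp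
    show "Der m \<subseteq> {\<lambda>_. 0}"
    proof
      fix d assume "d \<in> Der m"
      then have der: "derivation m d" unfolding Der_def by simp
      then have lin: "Vector_Spaces.linear sc sc d" unfolding derivation_def by blast
      obtain x1 y1 where D1: "d e1 = sc x1 e1 + sc y1 e2" using basis_ex[OF B] by blast
      obtain x2 y2 where D2: "d e2 = sc x2 e1 + sc y2 e2" using basis_ex[OF B] by blast
      note st = der_struct[OF bm nb E1 E2 det der D1 D2]
      have fc: "(x1 = 0 \<and> y2 = 0) \<or> (a11 = 0 \<and> a22 = 0 \<and> a12 \<noteq> 0 \<and> a21 \<noteq> 0 \<and> y2 = 2*x1 \<and> 3*x1 = 0)"
        using field_cases[OF det] st by blast
      have z: "x1 = 0 \<and> y2 = 0"
      proof (cases "CHAR('k) = 3")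
        case True
        have "\<not> (a11 = 0 \<and> a22 = 0 \<and> a12 \<noteq> 0 \<and> a21 \<noteq> 0)"
        proof
          assume c: "a11 = 0 \<and> a22 = 0 \<and> a12 \<noteq> 0 \<and> a21 \<noteq> 0"
          then have "alg_isomorphic m (A2 (a21^2 * a12))"
            using iso_A2[OF bm nb, of a21 a12] E1 E2 by simp
          moreover have "a21^2 * a12 \<noteq> 0" using c by simp
          ultimately show False using H True by blast
        qed
        then show ?thesis using fc by blast
      next
        case False
        then have "(3::'k) \<noteq> 0" by (rule three_ne0)
        then show ?thesis using fc by auto
      qed
      have "d = (\<lambda>_. 0)"
      proof
        fix v
        obtain r s where v: "v = sc r e1 + sc s e2" using basis_ex[OF B] by blast
        show "d v = 0" unfolding v lin_coeffs[OF lin D1 D2] using z st by (simp add: comb_zero)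
      qed
      then show "d \<in> {\<lambda>_. 0}" by simp
    qed
  qed
next
  have bm: "bilinear_mult m" using assms(1) unfolding evolution_algebra_def by blast
  fix e1 e2 \<alpha>
  assume c3: "CHAR('k) = 3"
  then have three: "(3::'k) = 0" by (rule three_eq0)
  assume h: "\<alpha> \<noteq> 0 \<and> natural_basis m e1 e2 \<and> m e1 e1 = e2 \<and> m e2 e2 = sc \<alpha> e1"
  then have nb: "natural_basis m e1 e2" and \<alpha>: "\<alpha> \<noteq> 0" by auto
  note B = nb_basis[OF nb]
  have E1: "m e1 e1 = sc 0 e1 + sc 1 e2" using h by (simp add: sc_def zero_prod_def)
  have E2: "m e2 e2 = sc \<alpha> e1 + sc 0 e2" using h by (simp add: sc_def zero_prod_def)
  have det: "0*0 - \<alpha>*1 \<noteq> 0" using \<alpha> by simp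
  note mc = mult_coeffs[OF bm nb E1 E2]
  show "Der m = {d. \<exists>a. \<forall>r s. d (sc r e1 + sc s e2) = sc (a * r) e1 - sc (a * s) e2}"
  proof
    show "Der m \<subseteq> {d. \<exists>a. \<forall>r s. d (sc r e1 + sc s e2) = sc (a * r) e1 - sc (a * s) e2}"
    proof
      fix d assume "d \<in> Der m"
      then have der: "derivation m d" unfolding Der_def by simp
      then have lin: "Vector_Spaces.linear sc sc d" unfolding derivation_def by blast
      obtain x1 y1 where D1: "d e1 = sc x1 e1 + sc y1 e2" using basis_ex[OF B] by blast
      obtain x2 y2 where D2: "d e2 = sc x2 e1 + sc y2 e2" using basis_ex[OF B] by blast
      note st = der_struct[OF bm nb E1 E2 det der D1 D2]
      have y2: "y2 = - x1"
      proof -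
        have "y2 = 2*x1" using st by simp
        then have "y2 + x1 = 3 * x1" by (simp add: algebra_simps)
        then have "y2 + x1 = 0" using three by simp
        then show ?thesis by (simp add: eq_neg_iff_add_eq_0)
      qed
      have "\<forall>r s. d (sc r e1 + sc s e2) = sc (x1 * r) e1 - sc (x1 * s) e2"
        unfolding lin_coeffs[OF lin D1 D2] comb_diff using st y2 by (simp add: mult.commute)
      then show "d \<in> {d. \<exists>a. \<forall>r s. d (sc r e1 + sc s e2) = sc (a * r) e1 - sc (a * s) e2}" by blast
    qed
    show "{d. \<exists>a. \<forall>r s. d (sc r e1 + sc s e2) = sc (a * r) e1 - sc (a * s) e2} \<subseteq> Der m"
    proof
      fix d assume "d \<in> {d. \<exists>a. \<forall>r s. d (sc r e1 + sc s e2) = sc (a * r) e1 - sc (a * s) e2}"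
      then obtain a where hd0: "\<And>r s. d (sc r e1 + sc s e2) = sc (a * r) e1 - sc (a * s) e2" by blast
      have hd: "d (sc r e1 + sc s e2) = sc (a * r) e1 + sc (- (a * s)) e2" for r s
        using hd0 comb_diff by metis
      have lin: "Vector_Spaces.linear sc sc d"
        unfolding Vector_Spaces.linear_iff
      proof (intro conjI allI)
        show "vector_space (sc :: 'k \<Rightarrow> _)" by (rule vs_sc)
        show "vector_space (sc :: 'k \<Rightarrow> _)" by (rule vs_sc)
      next
        fix x y
        obtain r s where x: "x = sc r e1 + sc s e2" using basis_ex[OF B] by blast
        obtain r' s' where y: "y = sc r' e1 + sc s' e2" using basis_ex[OF B] by blast
        show "d (x + y) = d x + d y" unfolding x y comb_add hd by (simp add: algebra_simps)
      next
        fix c x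
        obtain r s where x: "x = sc r e1 + sc s e2" using basis_ex[OF B] by blast
        show "d (sc c x) = sc c (d x)" unfolding x comb_sc hd by (simp add: algebra_simps)
      qed
      have "d (m x y) = m (d x) y + m x (d y)" for x y
      proof -
        obtain r s where x: "x = sc r e1 + sc s e2" using basis_ex[OF B] by blast
        obtain r' s' where y: "y = sc r' e1 + sc s' e2" using basis_ex[OF B] by blast
        show ?thesis unfolding x y mc hd comb_add
          apply (subst basis_uniq[OF B])
          apply (rule conjI)
           apply (rule diff3[OF three, where z = "a*s*s'*\<alpha>"])
           apply algebra
          apply (rule diff3[OF three, where z = "- (a*r*r')"])
          apply algebra
          done
      qed
      then show "d \<in> Der m" unfolding Der_def derivation_def using lin by blast
    qed
  qed
qed

end
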